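(* Let $0\to N\xrightarrow{i} G\to Q\to 1$ be a short exact sequence of groups with $N$ abelian (written additively), and let $Z^1(G,N)$ be the abelian group of crossed homomorphisms $\phi:G\to N$ (i.e. $\phi(x+y)=\phi(x)+x\cdot\phi(y)$). For $\phi,\psi\in Z^1(G,N)$ define $(\phi\diamond\psi)(x):=\phi(i(\psi(x)))$. Then $\phi\diamond\psi\in Z^1(G,N)$.
   Context: $G$ acts on $N$ by conjugation, $x\cdot n=x+n-x$. $Z^1(G,N)$ is an abelian group under pointwise addition. *)

theory Defs
  imports "HOL-Algebra.Algebra"
begin

text \<open>Groups are written multiplicatively (HOL-Algebra); the paper writes them additively.
  The action of G on N is conjugation inside G, transported back along the embedding i.\<close>

definition conj_act :: "('g,'a) monoid_scheme \<Rightarrow> ('n,'b) monoid_scheme \<Rightarrow> ('n \<Rightarrow> 'g) \<Rightarrow> 'g \<Rightarrow> 'n \<Rightarrow> 'n" where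
  "conj_act G N i x n = inv_into (carrier N) i (x \<otimes>\<^bsub>G\<^esub> i n \<otimes>\<^bsub>G\<^esub> inv\<^bsub>G\<^esub> x)"

definition crossed_hom :: "('g,'a) monoid_scheme \<Rightarrow> ('n,'b) monoid_scheme \<Rightarrow> ('n \<Rightarrow> 'g) \<Rightarrow> ('g \<Rightarrow> 'n) \<Rightarrow> bool" where
  "crossed_hom G N i \<phi> \<longleftrightarrow> \<phi> \<in> carrier G \<rightarrow> carrier N \<and>
     (\<forall>x\<in>carrier G. \<forall>y\<in>carrier G.
        \<phi> (x \<otimes>\<^bsub>G\<^esub> y) = \<phi> x \<otimes>\<^bsub>N\<^esub> conj_act G N i x (\<phi> y))"

end

theory Submission
  imports Defs
begin

locale l6 =
  G: group G + N: comm_group N for G :: "('g,'a) monoid_scheme" and N :: "('n,'b) monoid_scheme" +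
  fixes i :: "'n \<Rightarrow> 'g"
  assumes ihom: "i \<in> hom N G" and iinj: "inj_on i (carrier N)"
    and inorm: "i ` carrier N \<lhd> G"
begin

abbreviation "cj \<equiv> conj_act G N i"

lemma ic: "n \<in> carrier N \<Longrightarrow> i n \<in> carrier G"
  using ihom by (auto simp: hom_def)

lemma im: "a \<in> carrier N \<Longrightarrow> b \<in> carrier N \<Longrightarrow> i (a \<otimes>\<^bsub>N\<^esub> b) = i a \<otimes>\<^bsub>G\<^esub> i b"
  using ihom by (auto simp: hom_def)

lemma i1: "i \<one>\<^bsub>N\<^esub> = \<one>\<^bsub>G\<^esub>"
proof -
  have "i \<one>\<^bsub>N\<^esub> \<otimes>\<^bsub>G\<^esub> i \<one>\<^bsub>N\<^esub> = i \<one>\<^bsub>N\<^esub> \<otimes>\<^bsub>G\<^esub> \<one>\<^bsub>G\<^esub>"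
    using im[of "\<one>\<^bsub>N\<^esub>" "\<one>\<^bsub>N\<^esub>"] ic[of "\<one>\<^bsub>N\<^esub>"] by simp
  thus ?thesis using ic[of "\<one>\<^bsub>N\<^esub>"] G.l_cancel by (metis G.one_closed N.one_closed)
qed

lemma eqI: "a \<in> carrier N \<Longrightarrow> b \<in> carrier N \<Longrightarrow> i a = i b \<Longrightarrow> a = b"
  using iinj by (auto simp: inj_on_def)

lemma cj: assumes "x \<in> carrier G" "n \<in> carrier N"
  shows "cj x n \<in> carrier N" "i (cj x n) = x \<otimes>\<^bsub>G\<^esub> i n \<otimes>\<^bsub>G\<^esub> inv\<^bsub>G\<^esub> x"
proof -
  have "x \<otimes>\<^bsub>G\<^esub> i n \<otimes>\<^bsub>G\<^esub> inv\<^bsub>G\<^esub> x \<in> i ` carrier N"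
    using inorm assms ic by (simp add: G.normal_inv_iff)
  thus "cj x n \<in> carrier N" "i (cj x n) = x \<otimes>\<^bsub>G\<^esub> i n \<otimes>\<^bsub>G\<^esub> inv\<^bsub>G\<^esub> x"
    by (auto simp: conj_act_def inv_into_into f_inv_into_f)
qed

lemma cj_triv: assumes "m \<in> carrier N" "n \<in> carrier N" shows "cj (i m) n = n"
proof (rule eqI)
  show "cj (i m) n \<in> carrier N" using cj assms ic by auto
  have "i m \<otimes>\<^bsub>G\<^esub> i n = i n \<otimes>\<^bsub>G\<^esub> i m"
    using assms im by (metis N.m_comm)
  hence "i (cj (i m) n) = i n \<otimes>\<^bsub>G\<^esub> i m \<otimes>\<^bsub>G\<^esub> inv\<^bsub>G\<^esub> (i m)"
    using assms cj ic by simp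
  also have "\<dots> = i n" using assms ic by (simp add: G.m_assoc)
  finally show "i (cj (i m) n) = i n" .
qed (use assms in auto)

lemma cj_mult: assumes "x \<in> carrier G" "a \<in> carrier N" "b \<in> carrier N"
  shows "cj x (a \<otimes>\<^bsub>N\<^esub> b) = cj x a \<otimes>\<^bsub>N\<^esub> cj x b"
proof (rule eqI)
  show "i (cj x (a \<otimes>\<^bsub>N\<^esub> b)) = i (cj x a \<otimes>\<^bsub>N\<^esub> cj x b)"
  proof -
    have "i (cj x a \<otimes>\<^bsub>N\<^esub> cj x b) = (x \<otimes>\<^bsub>G\<^esub> i a \<otimes>\<^bsub>G\<^esub> inv\<^bsub>G\<^esub> x) \<otimes>\<^bsub>G\<^esub> (x \<otimes>\<^bsub>G\<^esub> i b \<otimes>\<^bsub>G\<^esub> inv\<^bsub>G\<^esub> x)"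
      using assms cj im by simp
    also have "\<dots> = x \<otimes>\<^bsub>G\<^esub> (i a \<otimes>\<^bsub>G\<^esub> ((inv\<^bsub>G\<^esub> x \<otimes>\<^bsub>G\<^esub> x) \<otimes>\<^bsub>G\<^esub> (i b \<otimes>\<^bsub>G\<^esub> inv\<^bsub>G\<^esub> x)))"
      using assms ic by (simp add: G.m_assoc) (metis G.inv_closed G.l_inv G.l_one G.m_assoc G.m_closed)
    also have "\<dots> = x \<otimes>\<^bsub>G\<^esub> (i a \<otimes>\<^bsub>G\<^esub> i b) \<otimes>\<^bsub>G\<^esub> inv\<^bsub>G\<^esub> x"
      using assms ic by (simp add: G.m_assoc del: G.l_inv_ex)
    finally show ?thesis using assms cj im by simp
  qed
qed (use assms cj in auto)

lemma cj_comp: assumes "x \<in> carrier G" "y \<in> carrier G" "n \<in> carrier N"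
  shows "cj (x \<otimes>\<^bsub>G\<^esub> y) n = cj x (cj y n)"
proof (rule eqI)
  show "i (cj (x \<otimes>\<^bsub>G\<^esub> y) n) = i (cj x (cj y n))"
    using assms cj ic by (simp add: G.m_assoc G.inv_mult_group)
qed (use assms cj in auto)

lemma cj_one: assumes "n \<in> carrier N" shows "cj \<one>\<^bsub>G\<^esub> n = n"
  using cj_triv[of "\<one>\<^bsub>N\<^esub>" n] assms i1 by simp

lemma cj_1: assumes "x \<in> carrier G" shows "cj x \<one>\<^bsub>N\<^esub> = \<one>\<^bsub>N\<^esub>"
  by (rule eqI) (use assms cj i1 in auto)

context
  fixes \<phi> assumes ch: "crossed_hom G N i \<phi>"
begin

lemma pc: "x \<in> carrier G \<Longrightarrow> \<phi> x \<in> carrier N" using ch by (auto simp: crossed_hom_def)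
lemma pm: "x \<in> carrier G \<Longrightarrow> y \<in> carrier G \<Longrightarrow> \<phi> (x \<otimes>\<^bsub>G\<^esub> y) = \<phi> x \<otimes>\<^bsub>N\<^esub> cj x (\<phi> y)"
  using ch by (auto simp: crossed_hom_def)

lemma p1: "\<phi> \<one>\<^bsub>G\<^esub> = \<one>\<^bsub>N\<^esub>"
proof -
  have "\<phi> \<one>\<^bsub>G\<^esub> \<otimes>\<^bsub>N\<^esub> \<phi> \<one>\<^bsub>G\<^esub> = \<phi> \<one>\<^bsub>G\<^esub> \<otimes>\<^bsub>N\<^esub> \<one>\<^bsub>N\<^esub>"
    using pm[of "\<one>\<^bsub>G\<^esub>" "\<one>\<^bsub>G\<^esub>"] cj_one pc by simp
  thus ?thesis using pc N.l_cancel by (metis G.one_closed N.one_closed)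
qed

lemma pinv: "x \<in> carrier G \<Longrightarrow> \<phi> x \<otimes>\<^bsub>N\<^esub> cj x (\<phi> (inv\<^bsub>G\<^esub> x)) = \<one>\<^bsub>N\<^esub>"
  using pm[of x "inv\<^bsub>G\<^esub> x"] p1 by simp

lemma pi: assumes "a \<in> carrier N" "b \<in> carrier N"
  shows "\<phi> (i (a \<otimes>\<^bsub>N\<^esub> b)) = \<phi> (i a) \<otimes>\<^bsub>N\<^esub> \<phi> (i b)"
  using assms pm[of "i a" "i b"] im cj_triv pc ic by simp

lemma pconj: assumes x: "x \<in> carrier G" and n: "n \<in> carrier N"
  shows "\<phi> (i (cj x n)) = cj x (\<phi> (i n))"
proof -
  have "\<phi> (i (cj x n)) = \<phi> (x \<otimes>\<^bsub>G\<^esub> (i n \<otimes>\<^bsub>G\<^esub> inv\<^bsub>G\<^esub> x))"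
    using cj assms ic by (simp add: G.m_assoc)
  also have "\<dots> = \<phi> x \<otimes>\<^bsub>N\<^esub> cj x (\<phi> (i n) \<otimes>\<^bsub>N\<^esub> cj (i n) (\<phi> (inv\<^bsub>G\<^esub> x)))"
    using assms pm ic by simp
  also have "\<dots> = \<phi> x \<otimes>\<^bsub>N\<^esub> (cj x (\<phi> (i n)) \<otimes>\<^bsub>N\<^esub> cj x (\<phi> (inv\<^bsub>G\<^esub> x)))"
    using assms cj_triv cj_mult pc ic by simp
  also have "\<dots> = cj x (\<phi> (i n)) \<otimes>\<^bsub>N\<^esub> (\<phi> x \<otimes>\<^bsub>N\<^esub> cj x (\<phi> (inv\<^bsub>G\<^esub> x)))"
    using assms cj pc ic by (simp add: N.m_lcomm)
  also have "\<dots> = cj x (\<phi> (i n))" using pinv assms cj pc ic by simp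
  finally show ?thesis .
qed

end

lemma main:
  assumes "crossed_hom G N i \<phi>" "crossed_hom G N i \<psi>"
  shows "crossed_hom G N i (\<lambda>x. \<phi> (i (\<psi> x)))"
  unfolding crossed_hom_def
proof (intro conjI ballI)
  show "(\<lambda>x. \<phi> (i (\<psi> x))) \<in> carrier G \<rightarrow> carrier N"
    using pc[OF assms(1)] pc[OF assms(2)] ic by auto
  fix x y assume x: "x \<in> carrier G" and y: "y \<in> carrier G"
  have "\<phi> (i (\<psi> (x \<otimes>\<^bsub>G\<^esub> y))) = \<phi> (i (\<psi> x \<otimes>\<^bsub>N\<^esub> cj x (\<psi> y)))"
    using pm[OF assms(2) x y] by simp
  also have "\<dots> = \<phi> (i (\<psi> x)) \<otimes>\<^bsub>N\<^esub> \<phi> (i (cj x (\<psi> y)))"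
    using pi[OF assms(1)] pc[OF assms(2)] cj x y by simp
  also have "\<dots> = \<phi> (i (\<psi> x)) \<otimes>\<^bsub>N\<^esub> cj x (\<phi> (i (\<psi> y)))"
    using pconj[OF assms(1) x] pc[OF assms(2)] y by simp
  finally show "\<phi> (i (\<psi> (x \<otimes>\<^bsub>G\<^esub> y))) = \<phi> (i (\<psi> x)) \<otimes>\<^bsub>N\<^esub> cj x (\<phi> (i (\<psi> y)))" .
qed

end

theorem lemma6:
  fixes G :: "('g,'a) monoid_scheme" and N :: "('n,'b) monoid_scheme" and Q :: "('q,'c) monoid_scheme"
    and i :: "'n \<Rightarrow> 'g" and p :: "'g \<Rightarrow> 'q" and \<phi> \<psi> :: "'g \<Rightarrow> 'n"
  assumes "group G" and "comm_group N" and "group Q"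
    and "i \<in> hom N G" and "inj_on i (carrier N)"
    and "p \<in> hom G Q" and "p ` carrier G = carrier Q"
    and "kernel G Q p = i ` carrier N"
    and "crossed_hom G N i \<phi>" and "crossed_hom G N i \<psi>"
  shows "crossed_hom G N i (\<lambda>x. \<phi> (i (\<psi> x)))"
proof -
  interpret gh: group_hom G Q p using assms by (simp add: group_hom_def group_hom_axioms_def)
  have "i ` carrier N \<lhd> G" using gh.normal_kernel assms(8) by simp
  then interpret l6 G N i using assms by (simp add: l6_def l6_axioms_def)
  show ?thesis using main assms by blast
qed

end
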